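(* Let $\psi_\alpha$ be either a Value-at-Risk metric $\mathrm{VaR}_\alpha$ or a distortion risk measure. Let $[Z_i(\tau_i,u_i)]_{i=1}^N$ be per-agent return distributions with quantile functions $\theta_i(\tau_i,u_i,w)$, let $\bar u_i=\arg\max_{u_i}\psi_\alpha[Z_i(\tau_i,u_i)]$ and $\bar{\boldsymbol u}=(\bar u_1,\dots,\bar u_N)$, let $k_1,\dots,k_N\ge0$ be constants not depending on $\boldsymbol u$, let $\theta_r(\boldsymbol\tau,\boldsymbol u,w)\le0$ for all $\boldsymbol u,w$, and let the mask be $m_\alpha(\boldsymbol\tau,\boldsymbol u)=0$ if $\boldsymbol u=\bar{\boldsymbol u}$ and $m_\alpha(\boldsymbol\tau,\boldsymbol u)=1$ otherwise. Let $Z_{jt}(\boldsymbol\tau,\boldsymbol u)$ be a joint return distribution (e.g. represented as a Dirac mixture $\sum_{j=1}^J p_j(\boldsymbol\tau,\boldsymbol u)\delta_{\theta(\boldsymbol\tau,\boldsymbol u,w_j)}$) whose quantile function is $$\theta(\boldsymbol\tau,\boldsymbol u,w)=\sum_{i=1}^N k_i\,\theta_i(\tau_i,u_i,w)+m_\alpha(\boldsymbol\tau,\boldsymbol u)\,\theta_r(\boldsymbol\tau,\boldsymbol u,w),\qquad w\in(0,1].$$ Then $[Z_i]_{i=1}^N$ satisfy the RIGM principle for $Z_{jt}$ with risk metric $\psi_\alpha$, i.e. $\arg\max_{\boldsymbol u}\psi_\alpha[Z_{jt}(\boldsymbol\tau,\boldsymbol u)]=\bar{\boldsymbol u}$.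
   Context: There are $N$ agents; agent $i$ has observation history $\tau_i$ and finite action set $U_i$; $\boldsymbol\tau=(\tau_1,\dots,\tau_N)$, $\boldsymbol u=(u_1,\dots,u_N)$. For a real random variable $Z$ with CDF $F_Z$, its quantile function is $\theta_Z(\omega)=\inf\{z\in\mathbb{R}:\omega\le F_Z(z)\}$, $\omega\in(0,1]$. $\mathrm{VaR}_\alpha(Z)=\theta_Z(\alpha)$. A distortion risk measure with differentiable distortion function $g:[0,1]\to[0,1]$ is $\psi(Z)=\int_0^1 g'(\omega)\theta_Z(\omega)\,d\omega$ (integrals assumed finite; examples CVaR, Wang, CPW). RIGM principle: $\arg\max_{\boldsymbol u}\psi_\alpha[Z_{jt}(\boldsymbol\tau,\boldsymbol u)]=(\arg\max_{u_1}\psi_\alpha[Z_1(\tau_1,u_1)],\dots,\arg\max_{u_N}\psi_\alpha[Z_N(\tau_N,u_N)])$. Standing assumption of the paper: argmax sets are singletons (ties broken by smallest index). *)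

theory Defs
  imports "HOL-Probability.Probability"
begin

definition quantile :: "real measure \<Rightarrow> real \<Rightarrow> real" where
  "quantile M \<omega> = Inf {z. \<omega> \<le> measure M {..z}}"

definition real_distribution' :: "real measure \<Rightarrow> bool" where
  "real_distribution' M \<longleftrightarrow> prob_space M \<and> sets M = sets borel"

definition VaR :: "real \<Rightarrow> real measure \<Rightarrow> real" where
  "VaR \<alpha> M = quantile M \<alpha>"

definition distortion_function :: "(real \<Rightarrow> real) \<Rightarrow> (real \<Rightarrow> real) \<Rightarrow> bool" where
  "distortion_function g g' \<longleftrightarrow>
     (\<forall>x\<in>{0..1}. (g has_real_derivative g' x) (at x within {0..1})) \<and>
     g ` {0..1} \<subseteq> {0..1} \<and> mono_on {0..1} g \<and> g 0 = 0 \<and> g 1 = 1"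

definition distortion_rm :: "(real \<Rightarrow> real) \<Rightarrow> real measure \<Rightarrow> real" where
  "distortion_rm g' M = integral {0..1} (\<lambda>\<omega>. g' \<omega> * quantile M \<omega>)"

definition argmax_set :: "('a \<Rightarrow> real) \<Rightarrow> 'a set \<Rightarrow> 'a set" where
  "argmax_set f A = {x \<in> A. \<forall>y\<in>A. f y \<le> f x}"

end

theory Submission
  imports Defs
begin
lemma gprime_nonneg:
  assumes "distortion_function g g'" and x: "x \<in> {0<..<1}"
  shows "g' x \<ge> 0"
proof -
  have d: "(g has_real_derivative g' x) (at x within {0..1})" using assms unfolding distortion_function_def using x by auto
  have "at x within {0..1} = at x" using x by (intro at_within_interior) (auto simp: interior_atLeastAtMost_real)
  with d have d2: "(g has_real_derivative g' x) (at x)" by simp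
  hence lim: "((\<lambda>h. (g (x + h) - g x) / h) \<longlongrightarrow> g' x) (at 0)" by (simp add: DERIV_def)
  hence lim2: "((\<lambda>h. (g (x + h) - g x) / h) \<longlongrightarrow> g' x) (at_right 0)"
    by (rule filterlim_mono[OF _ order_refl at_le]) simp
  have mono: "mono_on {0..1} g" using assms unfolding distortion_function_def by auto
  have ev: "\<forall>\<^sub>F h in at_right 0. 0 \<le> (g (x + h) - g x) / h"
  proof -
    have "\<forall>\<^sub>F h in at_right (0::real). 0 < h \<and> h < 1 - x"
      using x by (intro eventually_conj eventually_at_right_less) (auto simp: eventually_at_right_field intro: exI[of _ "1-x"])
    then show ?thesis
    proof (rule eventually_mono)
      fix h :: real assume h: "0 < h \<and> h < 1 - x"
      hence "g x \<le> g (x + h)" using mono x by (intro mono_onD[OF mono]) auto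
      thus "0 \<le> (g (x + h) - g x) / h" using h by simp
    qed
  qed
  show ?thesis by (rule tendsto_lowerbound[OF lim2 ev]) simp
qed

lemma integral_cong0:
  assumes "\<And>w. w \<in> {0<..1} \<Longrightarrow> F w = G w"
  shows "integral {0..1::real} F = integral {0..1} G"
  by (rule integral_spike[where S="{0}"]) (use assms in auto)

lemma integrable_cong0:
  assumes "\<And>w. w \<in> {0<..1} \<Longrightarrow> F w = G w" "G integrable_on {0..1::real}"
  shows "F integrable_on {0..1}"
  by (rule integrable_spike[where S="{0}" and f=G, OF assms(2)]) (use assms(1) in auto)

lemma integral_nonpos0:
  fixes F :: "real \<Rightarrow> real"
  assumes "\<And>w. w \<in> {0<..<1} \<Longrightarrow> F w \<le> 0" "F integrable_on {0..1::real}"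
  shows "integral {0..1} F \<le> 0"
proof -
  let ?G = "\<lambda>w. if w \<in> {0<..<1} then F w else 0"
  have "integral {0..1} F = integral {0..1} ?G"
    by (rule integral_spike[where S="{0,1}"]) auto
  moreover have Gi: "?G integrable_on {0..1}"
    by (rule integrable_spike[where S="{0,1}" and f=F, OF assms(2)]) auto
  moreover have "integral {0..1} ?G \<le> integral {0..1::real} (\<lambda>_. 0::real)"
    using Gi assms(1) by (intro Henstock_Kurzweil_Integration.integral_le) auto
  ultimately show ?thesis by simp
qed

theorem theorem6:
  fixes N :: nat
    and U :: "nat \<Rightarrow> 'a set"
    and Z :: "nat \<Rightarrow> 'a \<Rightarrow> real measure"
    and Zjt :: "(nat \<Rightarrow> 'a) \<Rightarrow> real measure"
    and \<theta>r :: "(nat \<Rightarrow> 'a) \<Rightarrow> real \<Rightarrow> real"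
    and k :: "nat \<Rightarrow> real"
    and ub :: "nat \<Rightarrow> 'a"
    and \<psi> :: "real measure \<Rightarrow> real"
  assumes U_fin: "\<forall>i<N. finite (U i) \<and> U i \<noteq> {}"
    and Z_distr: "\<forall>i<N. \<forall>a\<in>U i. real_distribution' (Z i a)"
    and Zjt_distr: "\<forall>u\<in>Pi\<^sub>E {..<N} U. real_distribution' (Zjt u)"
    and risk: "(\<exists>\<alpha>\<in>{0<..1}. \<psi> = VaR \<alpha>) \<or>
       (\<exists>g g'. distortion_function g g' \<and> \<psi> = distortion_rm g' \<and>
          (\<forall>i<N. \<forall>a\<in>U i. (\<lambda>\<omega>. g' \<omega> * quantile (Z i a) \<omega>) integrable_on {0..1}) \<and>
          (\<forall>u\<in>Pi\<^sub>E {..<N} U. (\<lambda>\<omega>. g' \<omega> * \<theta>r u \<omega>) integrable_on {0..1}) \<and>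
          (\<forall>u\<in>Pi\<^sub>E {..<N} U. (\<lambda>\<omega>. g' \<omega> * quantile (Zjt u) \<omega>) integrable_on {0..1}))"
    and ub_joint: "ub \<in> Pi\<^sub>E {..<N} U"
    and ub_argmax: "\<forall>i<N. argmax_set (\<lambda>a. \<psi> (Z i a)) (U i) = {ub i}"
    and k_nonneg: "\<forall>i<N. k i \<ge> 0"
    and \<theta>r_nonpos: "\<forall>u\<in>Pi\<^sub>E {..<N} U. \<forall>\<omega>\<in>{0<..1}. \<theta>r u \<omega> \<le> 0"
    and Zjt_quantile: "\<forall>u\<in>Pi\<^sub>E {..<N} U. \<forall>\<omega>\<in>{0<..1}.
       quantile (Zjt u) \<omega> =
         (\<Sum>i<N. k i * quantile (Z i (u i)) \<omega>) + (if u = ub then 0 else 1) * \<theta>r u \<omega>"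
    and joint_singleton: "\<exists>v. argmax_set (\<lambda>u. \<psi> (Zjt u)) (Pi\<^sub>E {..<N} U) = {v}"
  shows "argmax_set (\<lambda>u. \<psi> (Zjt u)) (Pi\<^sub>E {..<N} U) = {ub}"
proof -
  let ?P = "Pi\<^sub>E {..<N} U"
  have ubi: "\<And>i a. i < N \<Longrightarrow> a \<in> U i \<Longrightarrow> \<psi> (Z i a) \<le> \<psi> (Z i (ub i))"
    using ub_argmax unfolding argmax_set_def by blast
  have key: "\<psi> (Zjt u) \<le> \<psi> (Zjt ub)" if u: "u \<in> ?P" for u
  proof (cases "\<exists>\<alpha>\<in>{0<..1}. \<psi> = VaR \<alpha>")
    case True
    then obtain \<alpha> where a: "\<alpha> \<in> {0<..1}" and p: "\<psi> = VaR \<alpha>" by blast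
    have "\<psi> (Zjt u) = (\<Sum>i<N. k i * \<psi> (Z i (u i))) + (if u = ub then 0 else 1) * \<theta>r u \<alpha>"
      using Zjt_quantile u a by (simp add: p VaR_def)
    also have "\<dots> \<le> (\<Sum>i<N. k i * \<psi> (Z i (ub i)))"
    proof -
      have "(\<Sum>i<N. k i * \<psi> (Z i (u i))) \<le> (\<Sum>i<N. k i * \<psi> (Z i (ub i)))"
        using u k_nonneg ubi by (intro sum_mono mult_left_mono) (auto simp: PiE_def)
      moreover have "(if u = ub then 0 else 1) * \<theta>r u \<alpha> \<le> 0" using \<theta>r_nonpos u a by auto
      ultimately show ?thesis by linarith
    qed
    also have "\<dots> = \<psi> (Zjt ub)"
      using Zjt_quantile ub_joint a by (simp add: p VaR_def)
    finally show ?thesis .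
  next
    case False
    with risk obtain g g' where dist: "distortion_function g g'" and p: "\<psi> = distortion_rm g'"
      and iZ: "\<forall>i<N. \<forall>a\<in>U i. (\<lambda>\<omega>. g' \<omega> * quantile (Z i a) \<omega>) integrable_on {0..1}"
      and ir: "\<forall>u\<in>?P. (\<lambda>\<omega>. g' \<omega> * \<theta>r u \<omega>) integrable_on {0..1}"
      by blast
    have eq: "\<psi> (Zjt v) = (\<Sum>i<N. k i * \<psi> (Z i (v i))) + (if v = ub then 0 else 1) * integral {0..1} (\<lambda>\<omega>. g' \<omega> * \<theta>r v \<omega>)"
      if v: "v \<in> ?P" for v
    proof -
      have iZv: "\<And>i. i \<in> {..<N} \<Longrightarrow> (\<lambda>\<omega>. g' \<omega> * quantile (Z i (v i)) \<omega>) integrable_on {0..1}"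
        using iZ v by (auto simp: PiE_def)
      have "\<psi> (Zjt v) = integral {0..1} (\<lambda>\<omega>. (\<Sum>i<N. k i * (g' \<omega> * quantile (Z i (v i)) \<omega>)) + (if v = ub then 0 else 1) * (g' \<omega> * \<theta>r v \<omega>))"
        unfolding p distortion_rm_def
        by (rule integral_cong0) (use Zjt_quantile v in \<open>auto simp: algebra_simps sum_distrib_left\<close>)
      also have "\<dots> = integral {0..1} (\<lambda>\<omega>. (\<Sum>i<N. k i * (g' \<omega> * quantile (Z i (v i)) \<omega>))) + integral {0..1} (\<lambda>\<omega>. (if v = ub then 0 else 1) * (g' \<omega> * \<theta>r v \<omega>))"
        by (rule integral_add) (use iZv ir v in \<open>auto intro!: integrable_sum integrable_on_mult_right simp del: mult_1 mult_zero_left\<close>)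
      also have "\<dots> = (\<Sum>i<N. k i * \<psi> (Z i (v i))) + (if v = ub then 0 else 1) * integral {0..1} (\<lambda>\<omega>. g' \<omega> * \<theta>r v \<omega>)"
      proof -
        have "integral {0..1} (\<lambda>\<omega>. (\<Sum>i<N. k i * (g' \<omega> * quantile (Z i (v i)) \<omega>))) = (\<Sum>i<N. integral {0..1} (\<lambda>\<omega>. k i * (g' \<omega> * quantile (Z i (v i)) \<omega>)))"
          by (rule integral_sum) (auto intro: integrable_on_mult_right iZv)
        also have "\<dots> = (\<Sum>i<N. k i * \<psi> (Z i (v i)))"
          by (simp add: p distortion_rm_def)
        finally show ?thesis by simp
      qed
      finally show ?thesis .
    qed
    have "(\<Sum>i<N. k i * \<psi> (Z i (u i))) \<le> (\<Sum>i<N. k i * \<psi> (Z i (ub i)))"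
      using u k_nonneg ubi by (intro sum_mono mult_left_mono) (auto simp: PiE_def)
    moreover have "integral {0..1} (\<lambda>\<omega>. g' \<omega> * \<theta>r u \<omega>) \<le> 0"
      by (rule integral_nonpos0) (use ir u \<theta>r_nonpos gprime_nonneg[OF dist] in \<open>auto intro!: mult_nonneg_nonpos\<close>)
    ultimately show ?thesis using eq[OF u] eq[OF ub_joint]
      by (auto simp: mult_le_0_iff)
  qed
  have "ub \<in> argmax_set (\<lambda>u. \<psi> (Zjt u)) ?P"
    using key ub_joint unfolding argmax_set_def by blast
  with joint_singleton show ?thesis by auto
qed

end
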